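(* Let $G=A(n,\theta)$ with $n\ge3$ odd, and let $x\in G$ have order $4$. Then $x^2\notin[x,G]$; consequently the image of $x$ in $G/[x,G]$ has order $4$.
   Context: Let $n=2m+1$ be odd, $\mathbb{F}_{2^n}$ the field with $2^n$ elements, $\theta$ a generator of $\mathrm{Gal}(\mathbb{F}_{2^n}/\mathbb{F}_2)$, $a^\theta$ the image of $a$ under $\theta$. $G=A(n,\theta)$ is the group of matrices $\begin{bmatrix}1&a&b\\0&1&a^\theta\\0&0&1\end{bmatrix}$, $a,b\in\mathbb{F}_{2^n}$, denoted $(a,b)$, with $(a,b)(c,d)=(a+c,\,b+d+ac^\theta)$. For $x\in G$, $[x,G]$ denotes the subgroup generated by all commutators $x^{-1}g^{-1}xg$, $g\in G$. *)

theory Defs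
  imports "HOL-Algebra.Algebra"
begin

text \<open>Field automorphisms of a field (for a finite field of characteristic 2 these are
exactly the elements of the Galois group over the prime field).\<close>
definition field_aut :: "('a::field \<Rightarrow> 'a) \<Rightarrow> bool" where
  "field_aut \<sigma> \<longleftrightarrow> bij \<sigma> \<and> (\<forall>x y. \<sigma> (x + y) = \<sigma> x + \<sigma> y) \<and> (\<forall>x y. \<sigma> (x * y) = \<sigma> x * \<sigma> y)"

definition A_grp :: "('a::field \<Rightarrow> 'a) \<Rightarrow> ('a \<times> 'a) monoid" where
  "A_grp \<theta> = \<lparr>carrier = UNIV,
     monoid.mult = (\<lambda>(a, b) (c, d). (a + c, b + d + a * \<theta> c)),
     monoid.one = (0, 0)\<rparr>"

definition comm_sub :: "('g, 'b) monoid_scheme \<Rightarrow> 'g \<Rightarrow> 'g set" where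
  "comm_sub G x = generate G
     {inv\<^bsub>G\<^esub> x \<otimes>\<^bsub>G\<^esub> inv\<^bsub>G\<^esub> g \<otimes>\<^bsub>G\<^esub> x \<otimes>\<^bsub>G\<^esub> g | g. g \<in> carrier G}"

end

theory Submission imports Defs begin


lemma fa_add: "field_aut f \<Longrightarrow> f (x + y) = f x + f y" by (simp add: field_aut_def)
lemma fa_mult: "field_aut f \<Longrightarrow> f (x * y) = f x * f y" by (simp add: field_aut_def)
lemma fa_0: "field_aut f \<Longrightarrow> f 0 = 0"
proof -
  assume f: "field_aut f"
  have "f 0 + f 0 = f 0 + 0" using fa_add[OF f, of 0 0] by simp
  then show ?thesis by (rule add_left_imp_eq)
qed
lemma fa_neg: "field_aut f \<Longrightarrow> f (- x) = - f x"
proof -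
  assume f: "field_aut f"
  have "f x + f (- x) = 0" using fa_add[OF f, of x "-x"] fa_0[OF f] by simp
  then have "- f x = f (- x)" by (rule minus_unique)
  then show ?thesis by simp
qed
lemma fa_diff: "field_aut f \<Longrightarrow> f (x - y) = f x - f y"
  using fa_add[of f x "-y"] fa_neg[of f y] by simp
lemma fa_0_iff: "field_aut f \<Longrightarrow> f x = 0 \<longleftrightarrow> x = 0"
proof -
  assume f: "field_aut f"
  have "inj f" using f by (simp add: field_aut_def bij_is_inj)
  then have "f x = f 0 \<longleftrightarrow> x = 0" by (simp add: inj_eq)
  then show ?thesis using fa_0[OF f] by simp
qed
lemma fa_1: "field_aut f \<Longrightarrow> f 1 = 1"
proof -
  assume f: "field_aut f"
  have "f 1 * f 1 = f 1 * 1" using fa_mult[OF f, of 1 1] by simp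
  moreover have "f 1 \<noteq> 0" using fa_0_iff[OF f, of 1] by simp
  ultimately show ?thesis by simp
qed
lemma fa_div: "field_aut f \<Longrightarrow> f (x / y) = f x / f y"
proof (cases "y = 0")
  case True assume f: "field_aut f" then show ?thesis using True fa_0[OF f] by simp
next
  case False assume f: "field_aut f"
  have "f (x / y) * f y = f x" using fa_mult[OF f, of "x/y" y] False by simp
  moreover have "f y \<noteq> 0" using fa_0_iff[OF f] False by simp
  ultimately show ?thesis by (simp add: field_simps)
qed

lemma char2:
  assumes "card (UNIV :: 'a::{field,finite} set) = 2 ^ n"
  shows "(2::'a) = 0"
proof -
  have b: "bij_betw (\<lambda>y::'a. y + 1) UNIV UNIV"
    by (rule bij_betw_byWitness[where f'="\<lambda>y. y - 1"]) auto
  have "(\<Sum>y\<in>UNIV. y + 1) = (\<Sum>y\<in>(UNIV::'a set). y)"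
    using sum.reindex_bij_betw[OF b, of "\<lambda>y. y"] by simp
  then have "of_nat (card (UNIV::'a set)) = (0::'a)"
    by (simp add: sum.distrib)
  then have "(2::'a) ^ n = 0" using assms by simp
  then show ?thesis by simp
qed

lemma fermat:
  fixes y :: "'a::{field,finite}"
  shows "y ^ card (UNIV :: 'a set) = y"
proof (cases "y = 0")
  case True
  have "card (UNIV :: 'a set) > 0" by (simp add: finite_UNIV_card_ge_0)
  then show ?thesis using True by (simp add: zero_power)
next
  case False
  define S where "S = UNIV - {0::'a}"
  have b: "bij_betw (\<lambda>z. y * z) S S"
    unfolding S_def by (rule bij_betw_byWitness[where f'="\<lambda>z. z / y"]) (use False in auto)
  have e1: "(\<Prod>z\<in>S. y * z) = (\<Prod>z\<in>S. z)"
    using prod.reindex_bij_betw[OF b, of "\<lambda>z. z"] by simp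
  have e2: "(\<Prod>z\<in>S. y * z) = y ^ card S * (\<Prod>z\<in>S. z)"
    by (simp add: prod.distrib)
  have nz: "(\<Prod>z\<in>S. z) \<noteq> 0" unfolding S_def by (simp add: prod_zero_iff)
  have "y ^ card S * (\<Prod>z\<in>S. z) = 1 * (\<Prod>z\<in>S. z)" using e1 e2 by simp
  then have p1: "y ^ card S = 1" using nz by (rule mult_right_cancel[THEN iffD1, rotated])
  have cS: "card (UNIV :: 'a set) = Suc (card S)"
    unfolding S_def using card_Suc_Diff1[of "UNIV::'a set" 0] by simp
  show ?thesis using p1 cS by simp
qed

lemma sq_add2: "(2::'a::field) = 0 \<Longrightarrow> (x + y)^2 = x^2 + (y::'a)^2"
  by (simp add: power2_sum mult.assoc)

lemma neg2: "(2::'a::field) = 0 \<Longrightarrow> x + x = (0::'a)"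
  by (metis mult_2 mult_zero_left)

lemma frob_aut:
  assumes "(2::'a::{field,finite}) = 0"
  shows "field_aut (\<lambda>x::'a. x^2)"
proof -
  have inj: "inj (\<lambda>x::'a. x^2)"
  proof (rule injI)
    fix x y :: 'a assume "x^2 = y^2"
    then have "(x + y)^2 = 0" using sq_add2[OF assms] neg2[OF assms] by simp
    then have "x + y = 0" by simp
    then have "x + y = y + y" using neg2[OF assms, of y] by simp
    then show "x = y" by simp
  qed
  then have "bij (\<lambda>x::'a. x^2)" using finite_UNIV_inj_surj[OF finite_UNIV inj] by (simp add: bij_def)
  then show ?thesis unfolding field_aut_def using sq_add2[OF assms] by (simp add: power_mult_distrib)
qed

lemma no_AS:
  fixes \<theta> :: "'a::{field,finite} \<Rightarrow> 'a"
  assumes card: "card (UNIV :: 'a set) = 2 ^ n" and "odd n"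
    and aut: "field_aut \<theta>"
    and gen: "\<forall>\<sigma>. field_aut \<sigma> \<longrightarrow> (\<exists>j. \<sigma> = \<theta> ^^ j)"
  shows "\<theta> s \<noteq> s + 1"
proof
  assume ts: "\<theta> s = s + 1"
  have two: "(2::'a) = 0" by (rule char2[OF card])
  have "s + 1 + 1 = s + 2" by (simp add: add.assoc)
  then have ss: "s + 1 + 1 = s" using two by simp
  have it: "(\<theta> ^^ j) s = s \<or> (\<theta> ^^ j) s = s + 1" for j
  proof (induction j)
    case 0 then show ?case by simp
  next
    case (Suc j)
    have t1: "\<theta> (s + 1) = s"
      using fa_add[OF aut, of s 1] fa_1[OF aut] ts ss by simp
    from Suc show ?case using ts t1 by auto
  qed
  obtain j where "(\<lambda>x::'a. x^2) = \<theta> ^^ j" using gen frob_aut[OF two] by blast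
  then have "(\<lambda>x::'a. x^2) s = (\<theta> ^^ j) s" by (rule arg_cong[where f="\<lambda>g. g s"])
  then have "s^2 = (\<theta> ^^ j) s" by simp
  then have sq: "s^2 = s \<or> s^2 = s + 1" using it by simp
  show False
  proof (cases "s^2 = s")
    case True
    then have "s * (s - 1) = 0" by (simp add: algebra_simps power2_eq_square)
    then have "s = 0 \<or> s = 1" by simp
    then show False
    proof
      assume "s = 0" then show False using ts fa_0[OF aut] by simp
    next
      assume "s = 1" then show False using ts fa_1[OF aut] two by simp
    qed
  next
    case False
    then have s2: "s^2 = s + 1" using sq by simp
    have pw: "s ^ (2 ^ m) = (if even m then s else s + 1)" for m
    proof (induction m)
      case 0 then show ?case by simp
    next
      case (Suc m)
      have "s ^ (2 ^ Suc m) = (s ^ (2 ^ m))^2"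
        by (simp only: power_Suc2 power_mult)
      also have "\<dots> = (if even (Suc m) then s else s + 1)"
      proof (cases "even m")
        case True then show ?thesis using Suc s2 by simp
      next
        case False
        have "(s + 1)^2 = s" using sq_add2[OF two, of s 1] s2 ss by simp
        then show ?thesis using Suc False by simp
      qed
      finally show ?case .
    qed
    have "s ^ (2 ^ n) = s" using fermat[of s] card by simp
    then have "s + 1 = s" using pw[of n] \<open>odd n\<close> by simp
    then show False by simp
  qed
qed



lemma A_mult [simp]: "(a, b) \<otimes>\<^bsub>A_grp \<theta>\<^esub> (c, d) = (a + c, b + d + a * \<theta> c)"
  by (simp add: A_grp_def)
lemma A_one [simp]: "\<one>\<^bsub>A_grp \<theta>\<^esub> = (0, 0)" by (simp add: A_grp_def)
lemma A_carrier [simp]: "carrier (A_grp \<theta>) = UNIV" by (simp add: A_grp_def)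

lemma A_group: assumes aut: "field_aut \<theta>" shows "group (A_grp \<theta>)"
proof (rule groupI)
  fix x y z :: "'a \<times> 'a"
  show "x \<otimes>\<^bsub>A_grp \<theta>\<^esub> y \<otimes>\<^bsub>A_grp \<theta>\<^esub> z = x \<otimes>\<^bsub>A_grp \<theta>\<^esub> (y \<otimes>\<^bsub>A_grp \<theta>\<^esub> z)"
    by (cases x; cases y; cases z) (simp add: fa_add[OF aut] algebra_simps)
next
  fix x :: "'a \<times> 'a"
  show "\<one>\<^bsub>A_grp \<theta>\<^esub> \<otimes>\<^bsub>A_grp \<theta>\<^esub> x = x" by (cases x) simp
next
  fix x :: "'a \<times> 'a"
  obtain a b where x: "x = (a, b)" by (cases x)
  have "(- a, a * \<theta> a - b) \<otimes>\<^bsub>A_grp \<theta>\<^esub> x = \<one>\<^bsub>A_grp \<theta>\<^esub>"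
    using x by simp
  then show "\<exists>y\<in>carrier (A_grp \<theta>). y \<otimes>\<^bsub>A_grp \<theta>\<^esub> x = \<one>\<^bsub>A_grp \<theta>\<^esub>" by auto
qed auto

lemma A_inv: assumes aut: "field_aut \<theta>"
  shows "inv\<^bsub>A_grp \<theta>\<^esub> (a, b) = (- a, a * \<theta> a - b)"
  by (rule group.inv_equality[OF A_group[OF aut]]) auto

lemma dvd4: "d dvd (4::nat) \<Longrightarrow> \<not> d dvd 2 \<Longrightarrow> d = 4"
proof -
  assume h: "d dvd 4" "\<not> d dvd 2"
  have "d \<le> 4" using h dvd_imp_le[of d 4] by auto
  moreover have "d \<noteq> 0"
  proof
    assume "d = 0" with h(1) show False by simp
  qed
  ultimately have "d \<le> 4" "d > 0" by auto
  then have "d = 1 \<or> d = 2 \<or> d = 3 \<or> d = 4" by arith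
  then show ?thesis using h by auto
qed

theorem mainTheorem11:
  fixes \<theta> :: "'a::{field,finite} \<Rightarrow> 'a" and n :: nat and x :: "'a \<times> 'a"
  assumes "card (UNIV :: 'a set) = 2 ^ n" and "odd n" and "n \<ge> 3"
    and "field_aut \<theta>"
    and "\<forall>\<sigma>. field_aut \<sigma> \<longrightarrow> (\<exists>j. \<sigma> = \<theta> ^^ j)"
    and "group.ord (A_grp \<theta>) x = 4"
  shows "x [^]\<^bsub>A_grp \<theta>\<^esub> (2::nat) \<notin> comm_sub (A_grp \<theta>) x
       \<and> group.ord (A_grp \<theta> Mod comm_sub (A_grp \<theta>) x) (comm_sub (A_grp \<theta>) x #>\<^bsub>A_grp \<theta>\<^esub> x) = 4"
proof -
  note card = assms(1) and aut = assms(4) and ordx = assms(6)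
  define G where "G = A_grp \<theta>"
  interpret grp: group G unfolding G_def by (rule A_group[OF aut])
  have two: "(2::'a) = 0" by (rule char2[OF card])
  obtain a b where x: "x = (a, b)" by (cases x)
  have xsq: "x [^]\<^bsub>G\<^esub> (2::nat) = (0, a * \<theta> a)"
    unfolding G_def using x neg2[OF two] by (simp add: numeral_2_eq_2)
  have a0: "a \<noteq> 0"
  proof
    assume "a = 0"
    then have "x [^]\<^bsub>G\<^esub> (2::nat) = \<one>\<^bsub>G\<^esub>" using xsq fa_0[OF aut] by (simp add: G_def)
    then have "grp.ord x dvd 2" using grp.pow_eq_id[of x 2] by (simp add: G_def)
    then show False using ordx by (simp add: G_def)
  qed
  define H :: "('a \<times> 'a) set" where "H = {(0, a * \<theta> c - c * \<theta> a) | c. True}"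
  have Hsub: "subgroup H G"
  proof (rule grp.subgroupI)
    show "H \<subseteq> carrier G" by (simp add: G_def)
    show "H \<noteq> {}" unfolding H_def by blast
  next
    fix h assume "h \<in> H"
    then obtain c where h: "h = (0, a * \<theta> c - c * \<theta> a)" unfolding H_def by blast
    have "inv\<^bsub>G\<^esub> h = (0, a * \<theta> (- c) - (- c) * \<theta> a)"
      unfolding G_def h A_inv[OF aut] using fa_0[OF aut] fa_neg[OF aut] by simp
    then show "inv\<^bsub>G\<^esub> h \<in> H" unfolding H_def by blast
  next
    fix h k assume "h \<in> H" "k \<in> H"
    then obtain c e where h: "h = (0, a * \<theta> c - c * \<theta> a)" and k: "k = (0, a * \<theta> e - e * \<theta> a)"
      unfolding H_def by blast
    have "h \<otimes>\<^bsub>G\<^esub> k = (0, a * \<theta> (c + e) - (c + e) * \<theta> a)"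
      unfolding G_def h k using fa_add[OF aut] by (simp add: algebra_simps)
    then show "h \<otimes>\<^bsub>G\<^esub> k \<in> H" unfolding H_def by blast
  qed
  have gens: "{inv\<^bsub>G\<^esub> x \<otimes>\<^bsub>G\<^esub> inv\<^bsub>G\<^esub> g \<otimes>\<^bsub>G\<^esub> x \<otimes>\<^bsub>G\<^esub> g | g. g \<in> carrier G} \<subseteq> H"
  proof (rule subsetI)
    fix y assume "y \<in> {inv\<^bsub>G\<^esub> x \<otimes>\<^bsub>G\<^esub> inv\<^bsub>G\<^esub> g \<otimes>\<^bsub>G\<^esub> x \<otimes>\<^bsub>G\<^esub> g | g. g \<in> carrier G}"
    then obtain g where yg: "y = inv\<^bsub>G\<^esub> x \<otimes>\<^bsub>G\<^esub> inv\<^bsub>G\<^esub> g \<otimes>\<^bsub>G\<^esub> x \<otimes>\<^bsub>G\<^esub> g" by blast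
    obtain c d where g: "g = (c, d)" by (cases g)
    have "inv\<^bsub>G\<^esub> x \<otimes>\<^bsub>G\<^esub> inv\<^bsub>G\<^esub> g \<otimes>\<^bsub>G\<^esub> x \<otimes>\<^bsub>G\<^esub> g = (0, a * \<theta> c - c * \<theta> a)"
      unfolding G_def x g A_inv[OF aut] using fa_add[OF aut] fa_neg[OF aut]
      by (simp add: algebra_simps)
    then show "y \<in> H" unfolding H_def yg by blast
  qed
  define N where "N = comm_sub G x"
  have NH: "N \<subseteq> H" unfolding N_def comm_sub_def
    by (rule grp.generate_subgroup_incl[OF gens Hsub])
  have gs: "subgroup (generate G S) G" for S
    by (rule grp.generate_is_subgroup) (simp add: G_def)
  have Nsub: "subgroup N G" unfolding N_def comm_sub_def by (rule gs)
  have x2N: "x [^]\<^bsub>G\<^esub> (2::nat) \<notin> N"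
  proof
    assume "x [^]\<^bsub>G\<^esub> (2::nat) \<in> N"
    then have "x [^]\<^bsub>G\<^esub> (2::nat) \<in> H" using NH by blast
    then obtain c where c: "a * \<theta> a = a * \<theta> c - c * \<theta> a" unfolding xsq H_def by blast
    have ta: "\<theta> a \<noteq> 0" using fa_0_iff[OF aut] a0 by simp
    have "\<theta> (c / a) = c / a + 1"
      unfolding fa_div[OF aut] using c a0 ta by (simp add: field_simps)
    then show False using no_AS[OF card assms(2) aut assms(5)] by blast
  qed
  have Nnorm: "normal N G"
    unfolding grp.normal_inv_iff
  proof (intro conjI Nsub ballI)
    fix g h assume "g \<in> carrier G" "h \<in> N"
    then obtain e where h: "h = (0, e)" using NH unfolding H_def by blast
    obtain c d where g: "g = (c, d)" by (cases g)
    have "g \<otimes>\<^bsub>G\<^esub> h \<otimes>\<^bsub>G\<^esub> inv\<^bsub>G\<^esub> g = h"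
      unfolding G_def g h A_inv[OF aut] using fa_0[OF aut] fa_neg[OF aut] by (simp add: algebra_simps)
    then show "g \<otimes>\<^bsub>G\<^esub> h \<otimes>\<^bsub>G\<^esub> inv\<^bsub>G\<^esub> g \<in> N" using \<open>h \<in> N\<close> by simp
  qed
  interpret nrm: normal N G by (rule Nnorm)
  interpret Q: group "G Mod N" by (rule nrm.factorgroup_is_group)
  have xc: "x \<in> carrier G" by (simp add: G_def)
  have cosN: "N #>\<^bsub>G\<^esub> y = N \<longleftrightarrow> y \<in> N" if "y \<in> carrier G" for y
  proof
    assume "N #>\<^bsub>G\<^esub> y = N"
    then show "y \<in> N" using grp.rcos_self[OF that Nsub] by simp
  next
    assume "y \<in> N"
    then show "N #>\<^bsub>G\<^esub> y = N" by (rule subgroup.rcos_const[OF Nsub grp.is_group])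
  qed
  have Xc: "N #>\<^bsub>G\<^esub> x \<in> carrier (G Mod N)"
    unfolding carrier_FactGroup using xc by blast
  have Qpow: "(N #>\<^bsub>G\<^esub> x) [^]\<^bsub>G Mod N\<^esub> k = \<one>\<^bsub>G Mod N\<^esub> \<longleftrightarrow> x [^]\<^bsub>G\<^esub> k \<in> N" for k :: nat
    using nrm.FactGroup_pow[OF xc, of k] cosN[of "x [^]\<^bsub>G\<^esub> k"] xc by simp
  have x4: "x [^]\<^bsub>G\<^esub> (4::nat) = \<one>\<^bsub>G\<^esub>" using grp.pow_eq_id[OF xc, of 4] ordx by (simp add: G_def)
  have d4: "Q.ord (N #>\<^bsub>G\<^esub> x) dvd 4"
    using Q.pow_eq_id[OF Xc, of 4] Qpow[of 4] x4 nrm.one_closed by simp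
  have nd2: "\<not> Q.ord (N #>\<^bsub>G\<^esub> x) dvd 2"
    using Q.pow_eq_id[OF Xc, of 2] Qpow[of 2] x2N by simp
  have "Q.ord (N #>\<^bsub>G\<^esub> x) = 4" by (rule dvd4[OF d4 nd2])
  then show ?thesis using x2N unfolding N_def G_def by simp
qed

end
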